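(* (i) Let $p,m,n\in\mathbb{N}$ and let $\{R_j\}_{j\in J}$ be a system of representatives of the right cosets in $\Gamma_0(nm,p)\backslash\Gamma_0(n,p)$. Then for distinct $j_1,j_2\in J$, $\Gamma_0(nm)R_{j_1}\cap\Gamma_0(nm)R_{j_2}=\emptyset$. (ii) Let $p$ be a prime with $p\mid n$, $e\in\mathbb{N}$, and let $\{R_j\}_{j\in J}$ be a system of representatives of the right cosets in $\Gamma_0(p^en,p)\backslash\Gamma_0(n,p)$ (i.e. $\Gamma_0(n,p)=\bigsqcup_{j}\Gamma_0(p^en,p)R_j$). Then $\{R_j\}_{j\in J}$ is also a system of representatives of the right cosets in $\Gamma_0(p^en)\backslash\Gamma_0(n)$.
   Context: $\Gamma_0(n)=\{\begin{pmatrix}a&b\\c&d\end{pmatrix}\in SL(2,\mathbb{Z}):n\mid c\}$; $\Gamma_0(n,m)=\{\begin{pmatrix}a&b\\c&d\end{pmatrix}\in SL(2,\mathbb{Z}):n\mid c,\ m\mid b\}$. *)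

theory Defs
  imports "HOL-Analysis.Analysis"
begin

text \<open>2x2 integer matrices are rendered as int^2^2; for A = (a b; c d) we have
  A$1$1 = a, A$1$2 = b, A$2$1 = c, A$2$2 = d.\<close>

definition SL2Z :: "(int^2^2) set" where
  "SL2Z = {A. det A = 1}"

definition Gamma0 :: "nat \<Rightarrow> (int^2^2) set" where
  "Gamma0 n = {A \<in> SL2Z. int n dvd A$2$1}"

definition Gamma0' :: "nat \<Rightarrow> nat \<Rightarrow> (int^2^2) set" where
  "Gamma0' n m = {A \<in> SL2Z. int n dvd A$2$1 \<and> int m dvd A$1$2}"

definition rcos :: "(int^2^2) set \<Rightarrow> int^2^2 \<Rightarrow> (int^2^2) set" where
  "rcos H g = (\<lambda>h. h ** g) ` H"

definition right_coset_reps :: "(int^2^2) set \<Rightarrow> (int^2^2) set \<Rightarrow> 'j set \<Rightarrow> ('j \<Rightarrow> int^2^2) \<Rightarrow> bool" where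
  "right_coset_reps H G J R \<longleftrightarrow>
     (\<forall>j\<in>J. R j \<in> G) \<and> (\<forall>g\<in>G. \<exists>!j. j \<in> J \<and> g \<in> rcos H (R j))"

end

theory Submission
  imports Defs
begin

definition mk :: "int \<Rightarrow> int \<Rightarrow> int \<Rightarrow> int \<Rightarrow> int^2^2" where
  "mk a b c d = (\<chi> i j. if i = 1 then (if j = 1 then a else b) else (if j = 1 then c else d))"

lemma mk_simps[simp]:
  "mk a b c d $1$1 = a" "mk a b c d $1$2 = b" "mk a b c d $2$1 = c" "mk a b c d $2$2 = d"
  by (simp_all add: mk_def)

lemma mat2_eq: "(A::int^2^2) = B \<longleftrightarrow> A$1$1 = B$1$1 \<and> A$1$2 = B$1$2 \<and> A$2$1 = B$2$1 \<and> A$2$2 = B$2$2"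
  by (auto simp: vec_eq_iff forall_2)

lemma mult_ent[simp]: "((A::int^2^2) ** B)$i$j = A$i$1 * B$1$j + A$i$2 * B$2$j"
  by (simp add: matrix_matrix_mult_def sum_2)

lemma mat1_ent[simp]: "(mat 1 :: int^2^2)$1$1 = 1" "(mat 1 :: int^2^2)$1$2 = 0"
   "(mat 1 :: int^2^2)$2$1 = 0" "(mat 1 :: int^2^2)$2$2 = 1"
  by (simp_all add: mat_def)

definition adj :: "int^2^2 \<Rightarrow> int^2^2" where
  "adj A = mk (A$2$2) (- A$1$2) (- A$2$1) (A$1$1)"

lemma adj_left: "det A = 1 \<Longrightarrow> adj A ** A = mat 1"
  unfolding mat2_eq adj_def by (simp add: det_2 algebra_simps)

lemma adj_right: "det A = 1 \<Longrightarrow> A ** adj A = mat 1"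
  unfolding mat2_eq adj_def by (simp add: det_2 algebra_simps)

lemma det_adj: "det (adj A) = det A"
  unfolding adj_def by (simp add: det_2 algebra_simps)

lemma G0_mult: "A \<in> Gamma0 N \<Longrightarrow> B \<in> Gamma0 N \<Longrightarrow> A ** B \<in> Gamma0 N"
  unfolding Gamma0_def SL2Z_def by (auto simp: det_mul)

lemma G0'_mult: "A \<in> Gamma0' N M \<Longrightarrow> B \<in> Gamma0' N M \<Longrightarrow> A ** B \<in> Gamma0' N M"
  unfolding Gamma0'_def SL2Z_def by (auto simp: det_mul)

lemma G0_adj: "A \<in> Gamma0 N \<Longrightarrow> adj A \<in> Gamma0 N"
  unfolding Gamma0_def SL2Z_def by (auto simp: det_adj) (simp add: adj_def)

lemma G0'_adj: "A \<in> Gamma0' N M \<Longrightarrow> adj A \<in> Gamma0' N M"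
  unfolding Gamma0'_def SL2Z_def by (auto simp: det_adj) (simp_all add: adj_def)

lemma G0_det: "A \<in> Gamma0 N \<Longrightarrow> det A = 1"
  unfolding Gamma0_def SL2Z_def by auto

lemma G0'_det: "A \<in> Gamma0' N M \<Longrightarrow> det A = 1"
  unfolding Gamma0'_def SL2Z_def by auto

lemma G0'_sub: "Gamma0' N M \<subseteq> Gamma0 N"
  unfolding Gamma0'_def Gamma0_def by auto

lemma G0'_one: "mat 1 \<in> Gamma0' N M"
  unfolding Gamma0'_def SL2Z_def by (simp add: det_2)

lemma G0G0': "A \<in> Gamma0 N \<Longrightarrow> int M dvd A$1$2 \<Longrightarrow> A \<in> Gamma0' N M"
  unfolding Gamma0'_def Gamma0_def by auto

lemma partI:
  assumes reps: "right_coset_reps (Gamma0' N p) (Gamma0' n p) J R"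
    and NN: "int n dvd int N"
    and j: "j1 \<in> J" "j2 \<in> J"
    and x: "x \<in> rcos (Gamma0 N) (R j1)" "x \<in> rcos (Gamma0 N) (R j2)"
  shows "j1 = j2"
proof -
  obtain g1 where g1: "g1 \<in> Gamma0 N" "x = g1 ** R j1" using x(1) unfolding rcos_def by auto
  obtain g2 where g2: "g2 \<in> Gamma0 N" "x = g2 ** R j2" using x(2) unfolding rcos_def by auto
  have R1: "R j1 \<in> Gamma0' n p" and R2: "R j2 \<in> Gamma0' n p" using reps j unfolding right_coset_reps_def by auto
  define h where "h = adj g1 ** g2"
  have hG: "h \<in> Gamma0 N" unfolding h_def by (intro G0_mult G0_adj g1 g2)
  have e1: "R j1 = h ** R j2"
  proof -
    have "R j1 = (adj g1 ** g1) ** R j1" using adj_left[OF G0_det[OF g1(1)]] by simp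
    also have "\<dots> = adj g1 ** x" using g1 by (simp add: matrix_mul_assoc)
    also have "\<dots> = h ** R j2" using g2 by (simp add: h_def matrix_mul_assoc)
    finally show ?thesis .
  qed
  have "h = R j1 ** adj (R j2)"
    using e1 adj_right[OF G0'_det[OF R2]] by (simp add: matrix_mul_assoc[symmetric])
  hence "h \<in> Gamma0' n p" by (simp add: G0'_mult G0'_adj R1 R2)
  hence hH: "h \<in> Gamma0' N p" using hG unfolding Gamma0'_def Gamma0_def by auto
  have "R j1 \<in> rcos (Gamma0' N p) (R j2)" unfolding rcos_def using e1 hH by auto
  moreover have "R j1 \<in> rcos (Gamma0' N p) (R j1)" unfolding rcos_def using G0'_one
    by (metis image_eqI matrix_mul_lid)
  moreover have "\<exists>!j. j \<in> J \<and> R j1 \<in> rcos (Gamma0' N p) (R j)"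
    using reps R1 unfolding right_coset_reps_def by auto
  ultimately show ?thesis using j by auto
qed

lemma arith_part:
  fixes p n :: nat and c d :: int
  assumes "prime p" "p dvd n" "int n dvd c" "a * d - b * c = 1"
  shows "\<exists>s. int n dvd s \<and> int (p^e * n) dvd c + d * s"
proof -
  obtain c' where c: "c = int n * c'" using assms(3) by auto
  have "\<not> int p dvd d"
  proof
    assume "int p dvd d"
    moreover have "int p dvd c" using assms(2,3) by (meson dvd_trans int_dvd_int_iff)
    ultimately have "int p dvd a * d - b * c" by simp
    thus False using assms(1,4) by (simp add: prime_int_iff)
  qed
  hence "coprime (int p) d" using assms(1) by (simp add: prime_imp_coprime prime_nat_iff_prime)
  hence "coprime d (int p ^ e)" by (simp add: coprime_commute)
  then obtain u v where uv: "u * d + v * int p ^ e = 1" using bezout_int[of d "int p ^ e"] by auto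
  define s where "s = int n * (- c' * u)"
  have "c + d * s = int n * c' * (1 - u * d)" unfolding s_def c by (simp add: algebra_simps)
  also have "\<dots> = int (p^e * n) * (c' * v)" using uv by (simp add: algebra_simps flip: uv)
  finally have "int (p^e * n) dvd c + d * s" by (metis dvd_triv_left)
  moreover have "int n dvd s" unfolding s_def by simp
  ultimately show ?thesis by blast
qed

theorem mainTheorem9:
  shows "(\<forall>(p::nat) (m::nat) (n::nat) (J::'j set) (R::'j \<Rightarrow> int^2^2).
            right_coset_reps (Gamma0' (n*m) p) (Gamma0' n p) J R \<longrightarrow>
            (\<forall>j1\<in>J. \<forall>j2\<in>J. j1 \<noteq> j2 \<longrightarrow>
               rcos (Gamma0 (n*m)) (R j1) \<inter> rcos (Gamma0 (n*m)) (R j2) = {}))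
       \<and> (\<forall>(p::nat) (n::nat) (e::nat) (J::'k set) (R::'k \<Rightarrow> int^2^2).
            prime p \<and> p dvd n \<and> right_coset_reps (Gamma0' (p^e*n) p) (Gamma0' n p) J R \<longrightarrow>
            right_coset_reps (Gamma0 (p^e*n)) (Gamma0 n) J R)"
proof (intro conjI allI impI ballI)
  fix p m n :: nat and J :: "'j set" and R j1 j2
  assume r: "right_coset_reps (Gamma0' (n*m) p) (Gamma0' n p) J R" and j: "j1 \<in> J" "j2 \<in> J" "j1 \<noteq> j2"
  show "rcos (Gamma0 (n*m)) (R j1) \<inter> rcos (Gamma0 (n*m)) (R j2) = {}"
    using partI[OF r _ j(1,2)] j(3) by auto
next
  fix p n e :: nat and J :: "'k set" and R
  assume a: "prime p \<and> p dvd n \<and> right_coset_reps (Gamma0' (p^e*n) p) (Gamma0' n p) J R"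
  hence pr: "prime p" "p dvd n" and r: "right_coset_reps (Gamma0' (p^e*n) p) (Gamma0' n p) J R" by auto
  have RG: "\<forall>j\<in>J. R j \<in> Gamma0 n" using r G0'_sub unfolding right_coset_reps_def by blast
  have ex: "\<exists>j. j \<in> J \<and> g \<in> rcos (Gamma0 (p^e*n)) (R j)" if g: "g \<in> Gamma0 n" for g
  proof -
    have "det g = 1" using G0_det[OF g] .
    hence dg: "g$1$1 * g$2$2 - g$1$2 * g$2$1 = 1" by (simp add: det_2)
    obtain s where s: "int n dvd s" "int (p^e * n) dvd g$2$1 + g$2$2 * s"
      using arith_part[OF pr _ dg] g unfolding Gamma0_def by auto
    define L where "L = mk 1 0 s 1"
    define k where "k = mk 1 0 (- s) 1"
    have kG: "k \<in> Gamma0' n p" unfolding k_def Gamma0'_def SL2Z_def using s(1) by (simp add: det_2)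
    have LG: "L \<in> Gamma0' n p" unfolding L_def Gamma0'_def SL2Z_def using s(1) by (simp add: det_2)
    define h where "h = g ** L"
    have hG: "h \<in> Gamma0 (p^e*n)" unfolding h_def Gamma0_def SL2Z_def
      using G0_det[OF g] G0'_det[OF LG] s(2) by (simp add: det_mul L_def mult.commute)
    have "L ** k = mat 1" unfolding L_def k_def mat2_eq by simp
    hence gk: "g = h ** k" unfolding h_def by (simp flip: matrix_mul_assoc)
    obtain j h' where j: "j \<in> J" "h' \<in> Gamma0' (p^e*n) p" "k = h' ** R j"
      using r kG unfolding right_coset_reps_def rcos_def by blast
    have "g = (h ** h') ** R j" using gk j(3) by (simp add: matrix_mul_assoc)
    moreover have "h ** h' \<in> Gamma0 (p^e*n)" using G0_mult[OF hG] j(2) G0'_sub by blast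
    ultimately show ?thesis using j(1) unfolding rcos_def by blast
  qed
  show "right_coset_reps (Gamma0 (p^e*n)) (Gamma0 n) J R"
    unfolding right_coset_reps_def
  proof (intro conjI RG ballI)
    fix g assume g: "g \<in> Gamma0 n"
    show "\<exists>!j. j \<in> J \<and> g \<in> rcos (Gamma0 (p^e*n)) (R j)"
    proof -
      obtain j0 where j0: "j0 \<in> J" "g \<in> rcos (Gamma0 (p^e*n)) (R j0)" using ex[OF g] by blast
      have "j = j0" if "j \<in> J" "g \<in> rcos (Gamma0 (p^e*n)) (R j)" for j
        using partI[OF r _ that(1) j0(1) that(2) j0(2)] by simp
      thus ?thesis using j0 by blast
    qed
  qed
qed

end
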